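(* Let $G$ be a $\lambda$-graph and $Q$ a query over $G$. If there exists a sharing equivalence on $G$ containing $Q$, then the spreading $Q^{\#}$ is the smallest sharing equivalence on $G$ containing $Q$.
   Context: A pre-$\lambda$-graph is a directed graph whose nodes are of four kinds: an application node $@(n_1,n_2)$ has exactly two children, its left child $n_1$ and its right child $n_2$; an abstraction node $\lambda(n)$ has exactly one child, its body $n$; a free variable node has no children and carries an atom $\mathrm{id}(n)$ from a fixed set of atoms, distinct free variable nodes carrying distinct atoms; a bound variable node $\mathrm{var}(l)$ has exactly one outgoing binding edge, to an abstraction node $l$ (its binder). Letters $l,l'$ denote abstraction nodes. A trace is a finite sequence of directions from $\{\swarrow,\downarrow,\searrow\}$; $\epsilon$ is the empty trace and $d\cdot\tau$ is the trace $\tau$ extended by one final step $d$. Paths $n\xrightarrow{\tau}m$ are defined inductively: $n\xrightarrow{\epsilon}n$; if $n\xrightarrow{\tau}\lambda(m)$ then $n\xrightarrow{\downarrow\cdot\tau}m$; if $n\xrightarrow{\tau}@(m_1,m_2)$ then $n\xrightarrow{\swarrow\cdot\tau}m_1$ and $n\xrightarrow{\searrow\cdot\tau}m_2$ (binding edges are never followed). We write $n\xrightarrow{\tau}$ if $n\xrightarrow{\tau}m$ for some $m$. The path $n\xrightarrow{\tau}$ crosses a node $m$ if either $n\xrightarrow{\tau}m$, or $\tau=d\cdot\tau'$ and $n\xrightarrow{\tau'}$ crosses $m$. A root is a node $r$ such that the only path ending in $r$ has the empty trace. A node $m$ dominates $n$ if every path from a root to $n$ crosses $m$. A $\lambda$-graph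 is a pre-$\lambda$-graph that has finitely many nodes, is acyclic ($n\xrightarrow{\tau}n$ holds only for $\tau=\epsilon$), and is dominated (every bound variable node $\mathrm{var}(l)$ is dominated by its binder $l$). Two nodes are homogeneous if both are application nodes, or both abstraction nodes, or both free variable nodes, or both bound variable nodes; a binary relation $R$ on nodes is homogeneous if it only relates homogeneous nodes. Rules: $(\swarrow)$: $@(n_1,n_2)\,R\,@(m_1,m_2)$ implies $n_1\,R\,m_1$; $(\searrow)$: $@(n_1,n_2)\,R\,@(m_1,m_2)$ implies $n_2\,R\,m_2$; $(\downarrow)$: $\lambda(n)\,R\,\lambda(m)$ implies $n\,R\,m$; $(\circlearrowright)$: $\mathrm{var}(n)\,R\,\mathrm{var}(m)$ implies $n\,R\,m$. $R$ is propagated if closed under $(\swarrow),(\downarrow),(\searrow)$. $R$ is open if $n\,R\,m$ implies $n=m$ for all free variable nodes $n,m$. A blind bisimulation is a homogeneous propagated relation; a bisimulation is a blind bisimulation closed also under $(\circlearrowright)$. A blind sharing equivalence is a blind bisimulation that is an equivalence relation; a sharing equivalence is an open bisimulation that is an equivalence relation. $R^*$ denotes the reflexive–symmetric–transitive closure of $R$; $R^{\Downarrow}$ (propagation) is the smallest propagated relation containing $R$; $R^{\#}$ (spreading) is the smallest propagated equivalence relation containing $R$. A query over $G$ is a binary relation on the roots of $G$. *)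

theory Defs
  imports Main
begin

text \<open>Node labels: application, abstraction, free variable (carrying an atom),
  bound variable (carrying its binding edge to an abstraction node).\<close>
datatype ('n, 'a) node = App 'n 'n | Lam 'n | FVar 'a | BVar 'n

record ('n, 'a) lgraph =
  nodes :: "'n set"
  lab   :: "'n \<Rightarrow> ('n, 'a) node"

definition is_lam :: "('n, 'a) node \<Rightarrow> bool" where
  "is_lam k \<longleftrightarrow> (\<exists>b. k = Lam b)"

definition pre_lgraph :: "('n, 'a) lgraph \<Rightarrow> bool" where
  "pre_lgraph G \<longleftrightarrow>
     (\<forall>n \<in> nodes G.
        (\<forall>n1 n2. lab G n = App n1 n2 \<longrightarrow> n1 \<in> nodes G \<and> n2 \<in> nodes G) \<and>
        (\<forall>b. lab G n = Lam b \<longrightarrow> b \<in> nodes G) \<and>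
        (\<forall>l. lab G n = BVar l \<longrightarrow> l \<in> nodes G \<and> is_lam (lab G l))) \<and>
     (\<forall>n \<in> nodes G. \<forall>m \<in> nodes G. \<forall>a.
        lab G n = FVar a \<and> lab G m = FVar a \<longrightarrow> n = m)"

text \<open>Directions and traces. A trace is a list whose head is the LAST step:
  \<open>d # \<tau>\<close> is the trace \<open>\<tau>\<close> extended by the final step \<open>d\<close>.\<close>
datatype dir = DLeft | DDown | DRight

type_synonym trace = "dir list"

inductive path :: "('n, 'a) lgraph \<Rightarrow> 'n \<Rightarrow> trace \<Rightarrow> 'n \<Rightarrow> bool" for G where
  path_nil:   "n \<in> nodes G \<Longrightarrow> path G n [] n"
| path_down:  "path G n \<tau> m \<Longrightarrow> lab G m = Lam m' \<Longrightarrow> path G n (DDown # \<tau>) m'"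
| path_left:  "path G n \<tau> m \<Longrightarrow> lab G m = App m1 m2 \<Longrightarrow> path G n (DLeft # \<tau>) m1"
| path_right: "path G n \<tau> m \<Longrightarrow> lab G m = App m1 m2 \<Longrightarrow> path G n (DRight # \<tau>) m2"

fun crosses :: "('n, 'a) lgraph \<Rightarrow> 'n \<Rightarrow> trace \<Rightarrow> 'n \<Rightarrow> bool" where
  "crosses G n [] m = path G n [] m"
| "crosses G n (d # \<tau>) m = (path G n (d # \<tau>) m \<or> crosses G n \<tau> m)"

definition is_root :: "('n, 'a) lgraph \<Rightarrow> 'n \<Rightarrow> bool" where
  "is_root G r \<longleftrightarrow> r \<in> nodes G \<and> (\<forall>n \<tau>. path G n \<tau> r \<longrightarrow> \<tau> = [])"

definition dominates :: "('n, 'a) lgraph \<Rightarrow> 'n \<Rightarrow> 'n \<Rightarrow> bool" where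
  "dominates G m n \<longleftrightarrow> (\<forall>r \<tau>. is_root G r \<longrightarrow> path G r \<tau> n \<longrightarrow> crosses G r \<tau> m)"

definition lambda_graph :: "('n, 'a) lgraph \<Rightarrow> bool" where
  "lambda_graph G \<longleftrightarrow> pre_lgraph G \<and> finite (nodes G) \<and>
     (\<forall>n \<tau>. path G n \<tau> n \<longrightarrow> \<tau> = []) \<and>
     (\<forall>n \<in> nodes G. \<forall>l. lab G n = BVar l \<longrightarrow> dominates G l n)"

fun homog :: "('n, 'a) node \<Rightarrow> ('n, 'a) node \<Rightarrow> bool" where
  "homog (App _ _) (App _ _) = True"
| "homog (Lam _) (Lam _) = True"
| "homog (FVar _) (FVar _) = True"
| "homog (BVar _) (BVar _) = True"
| "homog _ _ = False"

definition homogeneous :: "('n, 'a) lgraph \<Rightarrow> 'n rel \<Rightarrow> bool" where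
  "homogeneous G R \<longleftrightarrow> (\<forall>(n, m) \<in> R. homog (lab G n) (lab G m))"

definition propagated :: "('n, 'a) lgraph \<Rightarrow> 'n rel \<Rightarrow> bool" where
  "propagated G R \<longleftrightarrow> (\<forall>(n, m) \<in> R.
     (\<forall>n1 n2 m1 m2. lab G n = App n1 n2 \<and> lab G m = App m1 m2 \<longrightarrow>
         (n1, m1) \<in> R \<and> (n2, m2) \<in> R) \<and>
     (\<forall>n' m'. lab G n = Lam n' \<and> lab G m = Lam m' \<longrightarrow> (n', m') \<in> R))"

definition var_closed :: "('n, 'a) lgraph \<Rightarrow> 'n rel \<Rightarrow> bool" where
  "var_closed G R \<longleftrightarrow> (\<forall>(n, m) \<in> R. \<forall>l l'.
     lab G n = BVar l \<and> lab G m = BVar l' \<longrightarrow> (l, l') \<in> R)"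

definition open_rel :: "('n, 'a) lgraph \<Rightarrow> 'n rel \<Rightarrow> bool" where
  "open_rel G R \<longleftrightarrow> (\<forall>(n, m) \<in> R. \<forall>a b.
     lab G n = FVar a \<and> lab G m = FVar b \<longrightarrow> n = m)"

definition blind_bisim :: "('n, 'a) lgraph \<Rightarrow> 'n rel \<Rightarrow> bool" where
  "blind_bisim G R \<longleftrightarrow> homogeneous G R \<and> propagated G R"

definition bisim :: "('n, 'a) lgraph \<Rightarrow> 'n rel \<Rightarrow> bool" where
  "bisim G R \<longleftrightarrow> blind_bisim G R \<and> var_closed G R"

definition sharing_equiv :: "('n, 'a) lgraph \<Rightarrow> 'n rel \<Rightarrow> bool" where
  "sharing_equiv G R \<longleftrightarrow> open_rel G R \<and> bisim G R \<and> equiv (nodes G) R"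

definition spreading :: "('n, 'a) lgraph \<Rightarrow> 'n rel \<Rightarrow> 'n rel" where
  "spreading G Q = \<Inter> {R. equiv (nodes G) R \<and> propagated G R \<and> Q \<subseteq> R}"

definition is_query :: "('n, 'a) lgraph \<Rightarrow> 'n rel \<Rightarrow> bool" where
  "is_query G Q \<longleftrightarrow> (\<forall>(r, s) \<in> Q. is_root G r \<and> is_root G s)"

end

theory Submission
  imports Defs "HOL-Library.Sublist"
begin

lemma path_det: "path G n t m1 \<Longrightarrow> path G n t m2 \<Longrightarrow> m1 = m2"
proof (induction t arbitrary: m1 m2)
  case Nil
  then show ?case by (auto elim: path.cases)
next
  case (Cons d t)
  from Cons.prems(1) obtain a1 where a1: "path G n t a1"
    and h1: "(d = DDown \<and> lab G a1 = Lam m1) \<or> (d = DLeft \<and> (\<exists>x. lab G a1 = App m1 x))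
       \<or> (d = DRight \<and> (\<exists>x. lab G a1 = App x m1))"
    by (cases rule: path.cases) auto
  from Cons.prems(2) obtain a2 where a2: "path G n t a2"
    and h2: "(d = DDown \<and> lab G a2 = Lam m2) \<or> (d = DLeft \<and> (\<exists>x. lab G a2 = App m2 x))
       \<or> (d = DRight \<and> (\<exists>x. lab G a2 = App x m2))"
    by (cases rule: path.cases) auto
  have "a1 = a2" using Cons.IH a1 a2 by blast
  then show ?case using h1 h2 by auto
qed

lemma path_start: "path G n t m \<Longrightarrow> n \<in> nodes G"
  by (induction rule: path.induct) auto

lemma path_nodes: "path G n t m \<Longrightarrow> pre_lgraph G \<Longrightarrow> m \<in> nodes G"
proof (induction rule: path.induct)
  case (path_nil n) then show ?case by simp
next
  case (path_down n \<tau> m m') then show ?case unfolding pre_lgraph_def by blast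
next
  case (path_left n \<tau> m m1 m2) then show ?case unfolding pre_lgraph_def by blast
next
  case (path_right n \<tau> m m1 m2) then show ?case unfolding pre_lgraph_def by blast
qed

lemma path_app: "path G b t2 c \<Longrightarrow> path G a t1 b \<Longrightarrow> path G a (t2 @ t1) c"
proof (induction rule: path.induct)
  case (path_nil n) then show ?case by simp
next
  case (path_down n \<tau> m m') then show ?case by (simp add: path.path_down)
next
  case (path_left n \<tau> m m1 m2) then show ?case by (simp add: path.path_left)
next
  case (path_right n \<tau> m m1 m2) then show ?case by (simp add: path.path_right)
qed

lemma path_split: "pre_lgraph G \<Longrightarrow> path G a (t2 @ t1) c \<Longrightarrow> \<exists>b. path G a t1 b \<and> path G b t2 c"
proof (induction t2 arbitrary: c)
  case Nil
  then have "path G a t1 c" by simp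
  moreover have "c \<in> nodes G" using path_nodes[of G a t1 c] Nil \<open>path G a t1 c\<close> by blast
  ultimately show ?case by (blast intro: path.path_nil)
next
  case (Cons d t2)
  from Cons.prems(2) obtain m where m: "path G a (t2 @ t1) m"
    and h: "(d = DDown \<and> lab G m = Lam c) \<or> (d = DLeft \<and> (\<exists>x. lab G m = App c x))
       \<or> (d = DRight \<and> (\<exists>x. lab G m = App x c))"
    by (cases rule: path.cases) auto
  from Cons.IH[OF Cons.prems(1) m] obtain b where b: "path G a t1 b" "path G b t2 m" by blast
  have "path G b (d # t2) c" using h b(2) by (auto intro: path.intros)
  then show ?case using b(1) by blast
qed

lemma crosses_path: "crosses G r \<tau> m \<Longrightarrow> \<exists>\<rho> \<tau>'. \<tau> = \<rho> @ \<tau>' \<and> path G r \<tau>' m"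
proof (induction \<tau>)
  case Nil then show ?case by auto
next
  case (Cons d \<tau>)
  show ?case
  proof (cases "path G r (d # \<tau>) m")
    case True then show ?thesis by (metis append_Nil)
  next
    case False
    with Cons.prems have "crosses G r \<tau> m" by simp
    with Cons.IH obtain \<rho> \<tau>' where "\<tau> = \<rho> @ \<tau>'" "path G r \<tau>' m" by blast
    then show ?thesis by (metis append_Cons)
  qed
qed

lemma transfer:
  assumes hom: "homogeneous G R" and prp: "propagated G R"
  shows "path G n \<sigma> n' \<Longrightarrow> (n, m) \<in> R \<Longrightarrow> m \<in> nodes G \<Longrightarrow> \<exists>m'. path G m \<sigma> m' \<and> (n', m') \<in> R"
proof (induction rule: path.induct)
  case (path_nil n)
  then show ?case by (blast intro: path.path_nil)
next
  case (path_down n \<tau> x x')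
  then obtain y where y: "path G m \<tau> y" "(x, y) \<in> R" by blast
  from hom y(2) have "homog (lab G x) (lab G y)" unfolding homogeneous_def by blast
  with path_down.hyps(2) obtain y' where y': "lab G y = Lam y'" by (cases "lab G y") auto
  from prp y(2) path_down.hyps(2) y' have "(x', y') \<in> R" unfolding propagated_def by blast
  then show ?case using y y' by (blast intro: path.intros)
next
  case (path_left n \<tau> x x1 x2)
  then obtain y where y: "path G m \<tau> y" "(x, y) \<in> R" by blast
  from hom y(2) have "homog (lab G x) (lab G y)" unfolding homogeneous_def by blast
  with path_left.hyps(2) obtain y1 y2 where y': "lab G y = App y1 y2" by (cases "lab G y") auto
  from prp y(2) path_left.hyps(2) y' have "(x1, y1) \<in> R" unfolding propagated_def by blast
  then show ?case using y y' by (blast intro: path.intros)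
next
  case (path_right n \<tau> x x1 x2)
  then obtain y where y: "path G m \<tau> y" "(x, y) \<in> R" by blast
  from hom y(2) have "homog (lab G x) (lab G y)" unfolding homogeneous_def by blast
  with path_right.hyps(2) obtain y1 y2 where y': "lab G y = App y1 y2" by (cases "lab G y") auto
  from prp y(2) path_right.hyps(2) y' have "(x2, y2) \<in> R" unfolding propagated_def by blast
  then show ?case using y y' by (blast intro: path.intros)
qed

lemma no_loop:
  assumes lg: "lambda_graph G" and hom: "homogeneous G R" and prp: "propagated G R"
    and uv: "(u, v) \<in> R" and p: "path G u \<sigma> v" and ne: "\<sigma> \<noteq> []"
  shows False
proof -
  have pre: "pre_lgraph G" and fin: "finite (nodes G)" and acyc: "\<And>n \<tau>. path G n \<tau> n \<Longrightarrow> \<tau> = []"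
    using lg unfolding lambda_graph_def by auto
  have stepex: "\<exists>c. path G b \<sigma> c \<and> (b, c) \<in> R" if "path G a \<sigma> b" "(a, b) \<in> R" for a b
    using transfer[OF hom prp that(1) that(2)] path_nodes[OF that(1) pre] by blast
  define f where "f a = (SOME c. path G a \<sigma> c \<and> (a, c) \<in> R)" for a
  define z where "z k = (f ^^ k) u" for k
  have zs: "path G (z k) \<sigma> (z (Suc k)) \<and> (z k, z (Suc k)) \<in> R" for k
  proof (induction k)
    case 0
    have "\<exists>c. path G u \<sigma> c \<and> (u, c) \<in> R" using p uv by blast
    then have "path G u \<sigma> (f u) \<and> (u, f u) \<in> R" unfolding f_def by (rule someI_ex)
    then show ?case unfolding z_def by simp
  next
    case (Suc k)
    then have "\<exists>c. path G (z (Suc k)) \<sigma> c \<and> (z (Suc k), c) \<in> R" using stepex by blast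
    then have "path G (z (Suc k)) \<sigma> (f (z (Suc k))) \<and> (z (Suc k), f (z (Suc k))) \<in> R"
      unfolding f_def by (rule someI_ex)
    moreover have "z (Suc (Suc k)) = f (z (Suc k))" unfolding z_def by simp
    ultimately show ?case by simp
  qed
  have zn: "z k \<in> nodes G" for k using zs[of k] path_start[of G "z k" \<sigma>] by blast
  have "range z \<subseteq> nodes G" using zn by auto
  then have "finite (range z)" using fin finite_subset by blast
  then have "\<not> inj z" using finite_imageD infinite_UNIV_nat by blast
  then obtain i j where ij: "i < j" "z i = z j"
    unfolding inj_def by (metis linorder_neqE_nat)
  have loop: "path G (z i) (concat (replicate d \<sigma>)) (z (i + d))" for d
  proof (induction d)
    case 0 then show ?case using zn[of i] by (simp add: path.path_nil)
  next
    case (Suc d)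
    have "path G (z i) (\<sigma> @ concat (replicate d \<sigma>)) (z (Suc (i + d)))"
      using path_app[OF conjunct1[OF zs[of "i+d"]] Suc.IH] by simp
    then show ?case by simp
  qed
  from loop[of "j - i"] ij have "path G (z i) (concat (replicate (j - i) \<sigma>)) (z i)" by simp
  then have "concat (replicate (j - i) \<sigma>) = []" using acyc by blast
  moreover have "j - i = Suc (j - i - 1)" using ij(1) by simp
  then have "replicate (j - i) \<sigma> = \<sigma> # replicate (j - i - 1) \<sigma>"
    by (metis replicate_Suc)
  ultimately show False using ne by simp
qed


lemma equiv_Inter: "F \<noteq> {} \<Longrightarrow> (\<And>R. R \<in> F \<Longrightarrow> equiv A R) \<Longrightarrow> equiv A (\<Inter>F)"
  unfolding equiv_def refl_on_def sym_def trans_def by blast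

lemma propagated_Inter: "(\<And>R. R \<in> F \<Longrightarrow> propagated G R) \<Longrightarrow> propagated G (\<Inter>F)"
  unfolding propagated_def by blast

theorem mainTheorem2:
  fixes G :: "('n, 'a) lgraph" and Q :: "'n rel"
  assumes "lambda_graph G"
    and "is_query G Q"
    and "\<exists>R. sharing_equiv G R \<and> Q \<subseteq> R"
  shows "sharing_equiv G (spreading G Q) \<and> Q \<subseteq> spreading G Q \<and>
         (\<forall>R. sharing_equiv G R \<and> Q \<subseteq> R \<longrightarrow> spreading G Q \<subseteq> R)"
proof -
  note lg = assms(1)
  have pre: "pre_lgraph G" and dom: "\<And>n l. n \<in> nodes G \<Longrightarrow> lab G n = BVar l \<Longrightarrow> dominates G l n"
    using lg unfolding lambda_graph_def by auto
  obtain R0 where R0: "sharing_equiv G R0" "Q \<subseteq> R0" using assms(3) by blast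
  have eqR0: "equiv (nodes G) R0" and homR0: "homogeneous G R0" and propR0: "propagated G R0"
    and varR0: "var_closed G R0" and openR0: "open_rel G R0"
    using R0(1) unfolding sharing_equiv_def bisim_def blind_bisim_def by auto
  define S where "S = spreading G Q"
  define F where "F = {R. equiv (nodes G) R \<and> propagated G R \<and> Q \<subseteq> R}"
  have S_F: "S = \<Inter>F" unfolding S_def F_def spreading_def by simp
  have minimal: "S \<subseteq> R" if "sharing_equiv G R" "Q \<subseteq> R" for R
  proof -
    have "R \<in> F" using that unfolding F_def sharing_equiv_def bisim_def blind_bisim_def by auto
    then show ?thesis unfolding S_F by blast
  qed
  have SR0: "S \<subseteq> R0" using minimal R0 .
  have "R0 \<in> F" using eqR0 propR0 R0(2) unfolding F_def by auto
  then have Fne: "F \<noteq> {}" by blast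
  have eqS: "equiv (nodes G) S" unfolding S_F by (rule equiv_Inter[OF Fne]) (auto simp: F_def)
  have propS: "propagated G S" unfolding S_F by (rule propagated_Inter) (auto simp: F_def)
  have QS: "Q \<subseteq> S" unfolding S_F F_def by blast
  have homS: "homogeneous G S" using homR0 SR0 unfolding homogeneous_def by blast
  have openS: "open_rel G S" using openR0 SR0 unfolding open_rel_def by blast
  have symS: "(y, x) \<in> S" if "(x, y) \<in> S" for x y using eqS that unfolding equiv_def sym_def by blast
  have transS: "(x, z) \<in> S" if "(x, y) \<in> S" "(y, z) \<in> S" for x y z
    using eqS that unfolding equiv_def trans_def by blast
  have symR0: "(y, x) \<in> R0" if "(x, y) \<in> R0" for x y using eqR0 that unfolding equiv_def sym_def by blast
  have transR0: "(x, z) \<in> R0" if "(x, y) \<in> R0" "(y, z) \<in> R0" for x y z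
    using eqR0 that unfolding equiv_def trans_def by blast
  have S_nodes: "S \<subseteq> nodes G \<times> nodes G" using eqS unfolding equiv_def by blast
  have root_nodes: "r \<in> nodes G \<and> s \<in> nodes G" if "(r, s) \<in> Q" for r s
    using assms(2) that unfolding is_query_def is_root_def by blast
  have roots: "is_root G r \<and> is_root G s" if "(r, s) \<in> Q" for r s
    using assms(2) that unfolding is_query_def by blast
  have trS: "(x, y) \<in> S" if h: "(r, s) \<in> S" "path G r \<tau> x" "path G s \<tau> y" for r s \<tau> x y
  proof -
    have "s \<in> nodes G" using S_nodes h(1) by blast
    then obtain y' where "path G s \<tau> y'" "(x, y') \<in> S" using transfer[OF homS propS h(2) h(1)] by blast
    then show ?thesis using path_det h(3) by metis
  qed
  have trR0: "(x, y) \<in> R0" if "(r, s) \<in> S" "path G r \<tau> x" "path G s \<tau> y" for r s \<tau> x y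
    using trS[OF that] SR0 by blast
  have core: "(a, b) \<in> S"
    if rs: "(r, s) \<in> S" and px: "path G r \<tau> x" and py: "path G s \<tau> y"
      and lx: "lab G x = BVar a" and ly: "lab G y = BVar b"
      and pa: "path G r \<tau>1 a" and pb: "path G s (\<sigma> @ \<tau>1) b"
    for r s \<tau> x y a b \<tau>1 \<sigma>
  proof -
    obtain x' where x': "path G s \<tau>1 x'" "path G x' \<sigma> b" using path_split[OF pre pb] by blast
    have ax: "(a, x') \<in> S" using trS[OF rs pa x'(1)] .
    show ?thesis
    proof (cases "\<sigma> = []")
      case True
      then have "x' = b" using x'(2) by (auto elim: path.cases)
      then show ?thesis using ax by simp
    next
      case False
      have "(x, y) \<in> R0" using trR0[OF rs px py] .
      then have "(a, b) \<in> R0" using varR0 lx ly unfolding var_closed_def by blast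
      moreover have "(a, x') \<in> R0" using ax SR0 by blast
      ultimately have "(x', b) \<in> R0" using symR0 transR0 by blast
      then show ?thesis using no_loop[OF lg homR0 propR0 _ x'(2) False] by blast
    qed
  qed
  define P where "P = {(n, m). \<exists>r s \<tau>. (r, s) \<in> Q \<and> path G r \<tau> n \<and> path G s \<tau> m}"
  have P_S: "(n, m) \<in> S" if "(n, m) \<in> P" for n m
    using that QS trS unfolding P_def by blast
  have P_R0: "(n, m) \<in> R0" if "(n, m) \<in> P" for n m using P_S[OF that] SR0 by blast
  have P_var: "(a, b) \<in> S" if h: "(x, y) \<in> P" "lab G x = BVar a" "lab G y = BVar b" for x y a b
  proof -
    obtain r s \<tau> where rs: "(r, s) \<in> Q" "path G r \<tau> x" "path G s \<tau> y" using h(1) unfolding P_def by blast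
    have "x \<in> nodes G" "y \<in> nodes G" using path_nodes[OF rs(2) pre] path_nodes[OF rs(3) pre] by auto
    then have "dominates G a x" "dominates G b y" using dom h by blast+
    then have "crosses G r \<tau> a" "crosses G s \<tau> b"
      using roots[OF rs(1)] rs unfolding dominates_def by blast+
    then obtain \<rho>1 \<tau>1 \<rho>2 \<tau>2 where t: "\<tau> = \<rho>1 @ \<tau>1" "path G r \<tau>1 a" "\<tau> = \<rho>2 @ \<tau>2" "path G s \<tau>2 b"
      using crosses_path by metis
    have rsS: "(r, s) \<in> S" "(s, r) \<in> S" using rs(1) QS symS by blast+
    have "suffix \<tau>1 \<tau>" "suffix \<tau>2 \<tau>" using t unfolding suffix_def by blast+
    then have "suffix \<tau>1 \<tau>2 \<or> suffix \<tau>2 \<tau>1" by (rule suffix_same_cases)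
    then show ?thesis
    proof
      assume "suffix \<tau>1 \<tau>2"
      then obtain \<sigma> where "\<tau>2 = \<sigma> @ \<tau>1" unfolding suffix_def by blast
      then show ?thesis using core[OF rsS(1) rs(2) rs(3) h(2) h(3) t(2)] t(4) by simp
    next
      assume "suffix \<tau>2 \<tau>1"
      then obtain \<sigma> where "\<tau>1 = \<sigma> @ \<tau>2" unfolding suffix_def by blast
      then have "(b, a) \<in> S" using core[OF rsS(2) rs(3) rs(2) h(3) h(2) t(4)] t(2) by simp
      then show ?thesis using symS by blast
    qed
  qed
  define E where "E = P \<union> P\<inverse>"
  have E_R0: "(n, m) \<in> R0" if "(n, m) \<in> E" for n m using that P_R0 symR0 unfolding E_def by blast
  have E_sym: "(m, n) \<in> E" if "(n, m) \<in> E" for n m using that unfolding E_def by blast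
  have E_nodes: "E \<subseteq> nodes G \<times> nodes G"
  proof -
    have "P \<subseteq> nodes G \<times> nodes G" unfolding P_def using path_nodes[OF _ pre] by blast
    then show ?thesis unfolding E_def by blast
  qed
  have E_var: "(a, b) \<in> S" if "(x, y) \<in> E" "lab G x = BVar a" "lab G y = BVar b" for x y a b
    using that P_var symS unfolding E_def by blast
  have P_prop: "(n1, m1) \<in> P \<and> (n2, m2) \<in> P" if h: "(n, m) \<in> P" "lab G n = App n1 n2" "lab G m = App m1 m2"
    for n m n1 n2 m1 m2
  proof -
    obtain r s \<tau> where rs: "(r, s) \<in> Q" "path G r \<tau> n" "path G s \<tau> m" using h(1) unfolding P_def by blast
    have "path G r (DLeft # \<tau>) n1" "path G s (DLeft # \<tau>) m1" "path G r (DRight # \<tau>) n2" "path G s (DRight # \<tau>) m2"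
      using rs h by (blast intro: path.intros)+
    then show ?thesis using rs(1) unfolding P_def by blast
  qed
  have P_propL: "(n', m') \<in> P" if h: "(n, m) \<in> P" "lab G n = Lam n'" "lab G m = Lam m'" for n m n' m'
  proof -
    obtain r s \<tau> where rs: "(r, s) \<in> Q" "path G r \<tau> n" "path G s \<tau> m" using h(1) unfolding P_def by blast
    have "path G r (DDown # \<tau>) n'" "path G s (DDown # \<tau>) m'" using rs h by (blast intro: path.intros)+
    then show ?thesis using rs(1) unfolding P_def by blast
  qed
  have E_prop: "(n1, m1) \<in> E \<and> (n2, m2) \<in> E" if "(n, m) \<in> E" "lab G n = App n1 n2" "lab G m = App m1 m2"
    for n m n1 n2 m1 m2
    using that P_prop unfolding E_def by blast
  have E_propL: "(n', m') \<in> E" if "(n, m) \<in> E" "lab G n = Lam n'" "lab G m = Lam m'" for n m n' m'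
    using that P_propL unfolding E_def by blast
  have Et_R0: "(x, y) \<in> R0" if "(x, y) \<in> E\<^sup>+" for x y
    using that by (induction rule: trancl_induct) (use E_R0 transR0 in blast)+
  have Et_prop: "(\<forall>x1 x2 y1 y2. lab G x = App x1 x2 \<and> lab G y = App y1 y2 \<longrightarrow> (x1, y1) \<in> E\<^sup>+ \<and> (x2, y2) \<in> E\<^sup>+)
      \<and> (\<forall>x' y'. lab G x = Lam x' \<and> lab G y = Lam y' \<longrightarrow> (x', y') \<in> E\<^sup>+)" if "(x, y) \<in> E\<^sup>+" for x y
    using that
  proof (induction rule: trancl_induct)
    case (base y)
    then show ?case using E_prop E_propL by blast
  next
    case (step y z)
    have "homog (lab G x) (lab G y)" using Et_R0[OF step.hyps(1)] homR0 unfolding homogeneous_def by blast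
    show ?case
    proof (rule conjI; intro allI impI)
      fix x1 x2 z1 z2 assume h: "lab G x = App x1 x2 \<and> lab G z = App z1 z2"
      with \<open>homog (lab G x) (lab G y)\<close> obtain y1 y2 where y: "lab G y = App y1 y2" by (cases "lab G y") auto
      have "(x1, y1) \<in> E\<^sup>+ \<and> (x2, y2) \<in> E\<^sup>+" using step.IH h y by blast
      moreover have "(y1, z1) \<in> E \<and> (y2, z2) \<in> E" using E_prop[OF step.hyps(2) y] h by blast
      ultimately show "(x1, z1) \<in> E\<^sup>+ \<and> (x2, z2) \<in> E\<^sup>+" by (meson trancl.trancl_into_trancl)
    next
      fix x' z' assume h: "lab G x = Lam x' \<and> lab G z = Lam z'"
      with \<open>homog (lab G x) (lab G y)\<close> obtain y' where y: "lab G y = Lam y'" by (cases "lab G y") auto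
      have "(x', y') \<in> E\<^sup>+" using step.IH h y by blast
      moreover have "(y', z') \<in> E" using E_propL[OF step.hyps(2) y] h by blast
      ultimately show "(x', z') \<in> E\<^sup>+" by (meson trancl.trancl_into_trancl)
    qed
  qed
  have Et_var: "\<forall>a b. lab G x = BVar a \<and> lab G y = BVar b \<longrightarrow> (a, b) \<in> S" if "(x, y) \<in> E\<^sup>+" for x y
    using that
  proof (induction rule: trancl_induct)
    case (base y)
    then show ?case using E_var by blast
  next
    case (step y z)
    have "homog (lab G x) (lab G y)" using Et_R0[OF step.hyps(1)] homR0 unfolding homogeneous_def by blast
    show ?case
    proof (intro allI impI)
      fix a c assume h: "lab G x = BVar a \<and> lab G z = BVar c"
      with \<open>homog (lab G x) (lab G y)\<close> obtain b where y: "lab G y = BVar b" by (cases "lab G y") auto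
      have "(a, b) \<in> S" using step.IH h y by blast
      moreover have "(b, c) \<in> S" using E_var[OF step.hyps(2) y] h by blast
      ultimately show "(a, c) \<in> S" using transS by blast
    qed
  qed
  define C where "C = Id_on (nodes G) \<union> E\<^sup>+"
  have Et_nodes: "E\<^sup>+ \<subseteq> nodes G \<times> nodes G" using E_nodes by (rule trancl_subset_Sigma)
  have Et_sym: "(y, x) \<in> E\<^sup>+" if "(x, y) \<in> E\<^sup>+" for x y
  proof -
    have "E\<inverse> = E" unfolding E_def by (simp add: converse_Un Un_commute)
    then show ?thesis using that by (metis converse_iff trancl_converse)
  qed
  have eqC: "equiv (nodes G) C"
  proof (rule equivI)
    show "C \<subseteq> nodes G \<times> nodes G" unfolding C_def using Et_nodes by blast
    show "refl_on (nodes G) C" unfolding C_def refl_on_def by blast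
    show "sym C" unfolding C_def sym_def using Et_sym by blast
    show "trans C" unfolding C_def trans_def
    proof (intro allI impI)
      fix x y z assume "(x, y) \<in> Id_on (nodes G) \<union> E\<^sup>+" "(y, z) \<in> Id_on (nodes G) \<union> E\<^sup>+"
      then show "(x, z) \<in> Id_on (nodes G) \<union> E\<^sup>+"
        by (elim UnE) (auto dest: trancl_trans)
    qed
  qed
  have C_app: "(n1, m1) \<in> C \<and> (n2, m2) \<in> C"
    if h: "(n, m) \<in> C" "lab G n = App n1 n2" "lab G m = App m1 m2" for n m n1 n2 m1 m2
  proof (cases "(n, m) \<in> E\<^sup>+")
    case True
    then have "(n1, m1) \<in> E\<^sup>+ \<and> (n2, m2) \<in> E\<^sup>+" using Et_prop[OF True] h(2,3) by blast
    then show ?thesis unfolding C_def by blast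
  next
    case False
    then have nm: "n = m" "n \<in> nodes G" using h(1) unfolding C_def by auto
    then have e: "n1 = m1" "n2 = m2" using h(2,3) by auto
    have "n1 \<in> nodes G" "n2 \<in> nodes G" using pre nm(2) h(2) unfolding pre_lgraph_def by blast+
    then show ?thesis using e unfolding C_def by blast
  qed
  have C_lam: "(n', m') \<in> C"
    if h: "(n, m) \<in> C" "lab G n = Lam n'" "lab G m = Lam m'" for n m n' m'
  proof (cases "(n, m) \<in> E\<^sup>+")
    case True
    then have "(n', m') \<in> E\<^sup>+" using Et_prop[OF True] h(2,3) by blast
    then show ?thesis unfolding C_def by blast
  next
    case False
    then have nm: "n = m" "n \<in> nodes G" using h(1) unfolding C_def by auto
    then have e: "n' = m'" using h(2,3) by auto
    have "n' \<in> nodes G" using pre nm(2) h(2) unfolding pre_lgraph_def by blast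
    then show ?thesis using e unfolding C_def by blast
  qed
  have propC: "propagated G C"
    unfolding propagated_def
  proof (intro ballI)
    fix p assume "p \<in> C"
    then obtain n m where p: "p = (n, m)" "(n, m) \<in> C" by (cases p) auto
    show "case p of (n, m) \<Rightarrow>
         (\<forall>n1 n2 m1 m2. lab G n = App n1 n2 \<and> lab G m = App m1 m2 \<longrightarrow>
             (n1, m1) \<in> C \<and> (n2, m2) \<in> C) \<and>
         (\<forall>n' m'. lab G n = Lam n' \<and> lab G m = Lam m' \<longrightarrow> (n', m') \<in> C)"
      unfolding p(1) using C_app[OF p(2)] C_lam[OF p(2)] by simp
  qed
  have QC: "Q \<subseteq> C"
  proof
    fix p assume "p \<in> Q"
    then obtain r s where p: "p = (r, s)" "(r, s) \<in> Q" by (cases p) auto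
    then have "path G r [] r" "path G s [] s" using root_nodes by (blast intro: path.path_nil)+
    then have "(r, s) \<in> P" using p unfolding P_def by blast
    then show "p \<in> C" using p unfolding C_def E_def by blast
  qed
  have "C \<in> F" using eqC propC QC unfolding F_def by blast
  then have SC: "S \<subseteq> C" unfolding S_F by blast
  have C_var: "(l, l') \<in> S"
    if h: "(n, m) \<in> C" "lab G n = BVar l" "lab G m = BVar l'" for n m l l'
  proof (cases "(n, m) \<in> E\<^sup>+")
    case True
    then show ?thesis using Et_var[OF True] h(2,3) by blast
  next
    case False
    then have nm: "n = m" "n \<in> nodes G" using h(1) unfolding C_def by auto
    then have e: "l = l'" using h(2,3) by auto
    have "l \<in> nodes G" using pre nm(2) h(2) unfolding pre_lgraph_def by blast
    then show ?thesis using e eqS unfolding equiv_def refl_on_def by blast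
  qed
  have varS: "var_closed G S"
    unfolding var_closed_def
  proof (intro ballI)
    fix p assume "p \<in> S"
    then obtain n m where p: "p = (n, m)" "(n, m) \<in> C" using SC by (cases p) auto
    show "case p of (n, m) \<Rightarrow> \<forall>l l'. lab G n = BVar l \<and> lab G m = BVar l' \<longrightarrow> (l, l') \<in> S"
      unfolding p(1) using C_var[OF p(2)] by simp
  qed
  have "sharing_equiv G S"
    unfolding sharing_equiv_def bisim_def blind_bisim_def
    using openS homS propS varS eqS by blast
  then show ?thesis using QS minimal unfolding S_def by blast
qed

end
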